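(* Let $X$, $Y$, $Z$ be Hausdorff locally convex topological vector spaces with topological duals $X^*$, $Y^*$, $Z^*$, and let $C\subseteq Z$ be a closed convex cone with $0\in C\neq Z$. Let $f:X\times Y\to\mathcal{F}(Z,C)$ be a convex function such that $(x_0,0)\in{\rm dom\,} f$ for some $x_0\in X$. Suppose that for every $z^*\in C^-\setminus\{0\}$ the extended real-valued function $y\mapsto\varphi_{(f(x_0,\cdot),z^* )}(y)=\inf_{z\in f(x_0,y)}(-z^*(z))$ is upper semicontinuous at $0\in Y$. Then \[ f_X(0)=\bigcap_{(y^*,z^* )\in Y^*\times (C^-\setminus\{0\})}(-f^* )((0,y^* ),z^* ), \] and there exists a family $\{y^*_{z^*}\colon z^*\in C^-\setminus\{0\},\ \varphi_{(f,z^* )}\text{ is proper}\}\subseteq Y^*$ such that \[ f_X(0)=\bigcap_{\substack{z^*\in C^-\setminus\{0\}\\ \varphi_{(f,z^* )}\text{ is proper}}}(-f^* )((0,y^*_{z^*}),z^* ). \]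
   Context: $\mathcal{F}(Z,C)=\{A\subseteq Z\colon A=\operatorname{cl}(A+C)\}$ (the empty set is included). $C^-=\{z^*\in Z^*\colon z^*(z)\le 0\ \forall z\in C\}$. A function $g:W\to\mathcal{F}(Z,C)$ on a vector space $W$ is convex iff $t g(w_1)+(1-t)g(w_2)\subseteq g(tw_1+(1-t)w_2)$ for all $w_1,w_2\in W$, $t\in(0,1)$ (equivalently, its graph $\{(w,z)\colon z\in g(w)\}$ is convex). ${\rm dom\,} g=\{w\colon g(w)\neq\emptyset\}$. For $z^*\in Z^*$ the scalarization is $\varphi_{(g,z^* )}(w)=\inf_{z\in g(w)}(-z^*(z))\in\mathbb{R}\cup\{\pm\infty\}$ (with $\inf\emptyset=+\infty$); in particular $\varphi_{(f,z^* )}:X\times Y\to\overline{\mathbb{R}}$, and it is proper iff it never takes the value $-\infty$ and is not identically $+\infty$. The marginal function is $f_X(y)=\operatorname{cl}\bigcup_{x\in X}f(x,y)$. The negative conjugate of $f$ is defined for $(x^*,y^* )\in X^*\times Y^*$, $z^*\in C^-\setminus\{0\}$ by $(-f^* )((x^*,y^* ),z^* )=\operatorname{cl}\bigcup_{(x,y)\in X\times Y}\big(f(x,y)+S_{((x^*,y^* ),z^* )}(-x,-y)\big)$, where $S_{((x^*,y^* ),z^* )}(x,y)=\{z\in Z\colon x^*(x)+y^*(y)+z^*(z)\le 0\}$. *)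

theory Defs
  imports "HOL-Analysis.Analysis"
begin

definition lc_hausdorff_tvs :: "'a::real_vector topology \<Rightarrow> bool" where
  "lc_hausdorff_tvs T \<longleftrightarrow>
     topspace T = UNIV \<and> Hausdorff_space T \<and>
     continuous_map (prod_topology T T) T (\<lambda>(x, y). x + y) \<and>
     continuous_map (prod_topology euclideanreal T) T (\<lambda>(a, x). a *\<^sub>R x) \<and>
     (\<forall>U. openin T U \<and> 0 \<in> U \<longrightarrow> (\<exists>V. openin T V \<and> convex V \<and> 0 \<in> V \<and> V \<subseteq> U))"

definition cdual :: "'a::real_vector topology \<Rightarrow> ('a \<Rightarrow> real) set" where
  "cdual T = {l. linear l \<and> continuous_map T euclideanreal l}"

definition msum :: "'a::real_vector set \<Rightarrow> 'a set \<Rightarrow> 'a set" where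
  "msum A B = {a + b | a b. a \<in> A \<and> b \<in> B}"

text \<open>The family F(Z,C) = {A. A = cl(A + C)} (empty set included).\<close>
definition FZC :: "'z::real_vector topology \<Rightarrow> 'z set \<Rightarrow> 'z set set" where
  "FZC T C = {A. A = T closure_of (msum A C)}"

definition neg_dual_cone :: "'z::real_vector topology \<Rightarrow> 'z set \<Rightarrow> ('z \<Rightarrow> real) set" where
  "neg_dual_cone T C = {zs \<in> cdual T. \<forall>z\<in>C. zs z \<le> 0}"

definition setval_convex :: "('w::real_vector \<Rightarrow> 'z::real_vector set) \<Rightarrow> bool" where
  "setval_convex g \<longleftrightarrow> (\<forall>w1 w2 t. 0 < t \<and> t < 1 \<longrightarrow>
      msum ((\<lambda>z. t *\<^sub>R z) ` g w1) ((\<lambda>z. (1 - t) *\<^sub>R z) ` g w2) \<subseteq> g (t *\<^sub>R w1 + (1 - t) *\<^sub>R w2))"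

definition sdom :: "('w \<Rightarrow> 'z set) \<Rightarrow> 'w set" where
  "sdom g = {w. g w \<noteq> {}}"

text \<open>Scalarization phi_(g,z*)(w) = inf_{z in g w} (- z*(z)), with inf {} = +infinity.\<close>
definition scalarization :: "('w \<Rightarrow> 'z set) \<Rightarrow> ('z \<Rightarrow> real) \<Rightarrow> 'w \<Rightarrow> ereal" where
  "scalarization g zs w = Inf ((\<lambda>z. ereal (- zs z)) ` g w)"

definition proper_ext :: "('w \<Rightarrow> ereal) \<Rightarrow> bool" where
  "proper_ext h \<longleftrightarrow> (\<forall>w. h w \<noteq> -\<infinity>) \<and> (\<exists>w. h w \<noteq> \<infinity>)"

definition usc_at :: "'a topology \<Rightarrow> ('a \<Rightarrow> ereal) \<Rightarrow> 'a \<Rightarrow> bool" where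
  "usc_at T h a \<longleftrightarrow> (\<forall>c. h a < c \<longrightarrow> (\<exists>U. openin T U \<and> a \<in> U \<and> (\<forall>y\<in>U. h y < c)))"

definition marginal :: "'z topology \<Rightarrow> ('x \<times> 'y \<Rightarrow> 'z set) \<Rightarrow> 'y \<Rightarrow> 'z set" where
  "marginal T f y = T closure_of (\<Union>x. f (x, y))"

definition Sfun :: "('x \<Rightarrow> real) \<times> ('y \<Rightarrow> real) \<Rightarrow> ('z \<Rightarrow> real) \<Rightarrow> 'x \<times> 'y \<Rightarrow> 'z set" where
  "Sfun xys zs xy = {z. fst xys (fst xy) + snd xys (snd xy) + zs z \<le> 0}"

definition neg_conj :: "'z topology \<Rightarrow> ('x::real_vector \<times> 'y::real_vector \<Rightarrow> 'z::real_vector set)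
     \<Rightarrow> ('x \<Rightarrow> real) \<times> ('y \<Rightarrow> real) \<Rightarrow> ('z \<Rightarrow> real) \<Rightarrow> 'z set" where
  "neg_conj T f xys zs = T closure_of (\<Union>(x, y). msum (f (x, y)) (Sfun xys zs (- x, - y)))"

end

theory Submission
  imports Defs "HOL-Analysis.Analysis"
begin


lemma tvs_add: assumes "lc_hausdorff_tvs T" shows "continuous_map T T (\<lambda>v. a + v)"
proof -
  have c: "continuous_map (prod_topology T T) T (\<lambda>(x, y). x + y)" and ts: "topspace T = UNIV"
    using assms by (auto simp: lc_hausdorff_tvs_def)
  have "continuous_map T (prod_topology T T) (\<lambda>v. (a, v))"
    by (intro continuous_map_pairedI) (auto simp: ts)
  from continuous_map_compose[OF this c] show ?thesis by (simp add: o_def)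
qed

lemma tvs_scale: assumes "lc_hausdorff_tvs T" shows "continuous_map T T (\<lambda>v. c *\<^sub>R v)"
proof -
  have c: "continuous_map (prod_topology euclideanreal T) T (\<lambda>(a, x). a *\<^sub>R x)" and ts: "topspace T = UNIV"
    using assms by (auto simp: lc_hausdorff_tvs_def)
  have "continuous_map T (prod_topology euclideanreal T) (\<lambda>v. (c, v))"
    by (intro continuous_map_pairedI) (auto simp: ts)
  from continuous_map_compose[OF this c] show ?thesis by (simp add: o_def)
qed

lemma tvs_ray: assumes "lc_hausdorff_tvs T" shows "continuous_map euclideanreal T (\<lambda>t. t *\<^sub>R x)"
proof -
  have c: "continuous_map (prod_topology euclideanreal T) T (\<lambda>(a, x). a *\<^sub>R x)" and ts: "topspace T = UNIV"
    using assms by (auto simp: lc_hausdorff_tvs_def)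
  have "continuous_map euclideanreal (prod_topology euclideanreal T) (\<lambda>t. (t, x))"
    by (intro continuous_map_pairedI) (auto simp: ts)
  from continuous_map_compose[OF this c] show ?thesis by (simp add: o_def)
qed

lemma tvs_open_pre: assumes "lc_hausdorff_tvs T" "continuous_map T T g" "openin T W"
  shows "openin T {v. g v \<in> W}"
proof -
  have ts: "topspace T = UNIV" using assms by (auto simp: lc_hausdorff_tvs_def)
  show ?thesis using openin_continuous_map_preimage[OF assms(2,3)] by (simp add: ts)
qed

lemma tvs_absorb: assumes "lc_hausdorff_tvs T" "openin T W" "0 \<in> W"
  shows "\<exists>e>0. \<forall>t. \<bar>t\<bar> < e \<longrightarrow> t *\<^sub>R x \<in> W"
proof -
  have "openin euclideanreal {t \<in> topspace euclideanreal. t *\<^sub>R x \<in> W}"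
    by (rule openin_continuous_map_preimage[OF tvs_ray[OF assms(1)] assms(2)])
  then have o: "open {t. t *\<^sub>R x \<in> W}" by simp
  have "0 \<in> {t. t *\<^sub>R x \<in> W}" using assms by simp
  then obtain e where "e > 0" "\<forall>y. dist y 0 < e \<longrightarrow> y \<in> {t. t *\<^sub>R x \<in> W}"
    using o unfolding open_dist by blast
  then show ?thesis by (auto simp: dist_real_def)
qed

lemma tvs_lin_cont:
  assumes T: "lc_hausdorff_tvs T" and l: "linear (l::'a::real_vector \<Rightarrow> real)"
    and W: "openin T W" "0 \<in> W" and bd: "\<And>v. v \<in> W \<Longrightarrow> \<bar>l v\<bar> \<le> Bd"
  shows "continuous_map T euclideanreal l"
proof -
  have ts: "topspace T = UNIV" using T by (auto simp: lc_hausdorff_tvs_def)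
  have Bd: "Bd \<ge> 0" using bd[OF W(2)] by simp
  show ?thesis unfolding continuous_map_def
  proof (intro conjI allI impI)
    show "l \<in> topspace T \<rightarrow> topspace euclideanreal" by simp
    fix U :: "real set" assume "openin euclideanreal U"
    then have oU: "open U" by simp
    show "openin T {x \<in> topspace T. l x \<in> U}"
    proof (subst openin_subopen, intro ballI)
      fix x assume "x \<in> {x \<in> topspace T. l x \<in> U}"
      then have "l x \<in> U" by simp
      then obtain e where e: "e > 0" "\<forall>y. dist y (l x) < e \<longrightarrow> y \<in> U"
        using oU unfolding open_dist by blast
      define d where "d = e / (Bd + 1)"
      have d: "d > 0" using e Bd by (simp add: d_def)
      have dB: "d * Bd < e" using e Bd unfolding d_def by (simp add: field_simps)
      define N where "N = {v. (1/d) *\<^sub>R (v + (- x)) \<in> W}"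
      have "continuous_map T T ((\<lambda>v. (1/d) *\<^sub>R v) \<circ> (\<lambda>v. -x + v))"
        by (rule continuous_map_compose[OF tvs_add[OF T] tvs_scale[OF T]])
      then have oN: "openin T N" unfolding N_def using tvs_open_pre[OF T _ W(1)]
        by (simp add: o_def add.commute)
      have xN: "x \<in> N" using W(2) by (simp add: N_def)
      have "N \<subseteq> {x \<in> topspace T. l x \<in> U}"
      proof
        fix v assume "v \<in> N"
        then have "\<bar>l ((1/d) *\<^sub>R (v + (- x)))\<bar> \<le> Bd" using bd N_def by blast
        then have "\<bar>(l v - l x) / d\<bar> \<le> Bd"
          using l by (simp add: linear_add linear_scale linear_uminus linear_diff diff_divide_distrib)
        then have "\<bar>l v - l x\<bar> / d \<le> Bd" using d by simp
        then have "\<bar>l v - l x\<bar> \<le> d * Bd" using d by (simp add: divide_le_eq mult.commute)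
        then have "dist (l v) (l x) < e" using dB by (simp add: dist_real_def)
        then show "v \<in> {x \<in> topspace T. l x \<in> U}" using e ts by auto
      qed
      then show "\<exists>T'. openin T T' \<and> x \<in> T' \<and> T' \<subseteq> {x \<in> topspace T. l x \<in> U}"
        using oN xN by blast
    qed
  qed
qed



definition sublin :: "('a::real_vector \<Rightarrow> real) \<Rightarrow> bool" where
  "sublin q \<longleftrightarrow> (\<forall>x y. q (x + y) \<le> q x + q y) \<and> (\<forall>c x. c \<ge> 0 \<longrightarrow> q (c *\<^sub>R x) = c * q x)"

definition lgraph :: "('a::real_vector \<Rightarrow> real) \<Rightarrow> 'a \<Rightarrow> ('a \<times> real) set \<Rightarrow> bool" where
  "lgraph q w H \<longleftrightarrow> (\<forall>x r y s. (x, r) \<in> H \<longrightarrow> (y, s) \<in> H \<longrightarrow> (x + y, r + s) \<in> H)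
     \<and> (\<forall>x r c. (x, r) \<in> H \<longrightarrow> (c *\<^sub>R x, c * r) \<in> H)
     \<and> (\<forall>x r s. (x, r) \<in> H \<longrightarrow> (x, s) \<in> H \<longrightarrow> r = s)
     \<and> (\<forall>x r. (x, r) \<in> H \<longrightarrow> r \<le> q x)
     \<and> (w, q w) \<in> H"

lemma lg_add: "lgraph q w H \<Longrightarrow> (x, r) \<in> H \<Longrightarrow> (y, s) \<in> H \<Longrightarrow> (x + y, r + s) \<in> H"
  unfolding lgraph_def by blast
lemma lg_scale: "lgraph q w H \<Longrightarrow> (x, r) \<in> H \<Longrightarrow> (c *\<^sub>R x, c * r) \<in> H"
  unfolding lgraph_def by blast
lemma lg_fun: "lgraph q w H \<Longrightarrow> (x, r) \<in> H \<Longrightarrow> (x, s) \<in> H \<Longrightarrow> r = s"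
  unfolding lgraph_def by blast
lemma lg_dom: "lgraph q w H \<Longrightarrow> (x, r) \<in> H \<Longrightarrow> r \<le> q x"
  unfolding lgraph_def by blast
lemma lg_w: "lgraph q w H \<Longrightarrow> (w, q w) \<in> H"
  unfolding lgraph_def by blast

lemma sublin_0: "sublin q \<Longrightarrow> q 0 = 0"
  unfolding sublin_def by (metis order_refl mult_zero_left scale_zero_left)

lemma sublin_neg: assumes "sublin q" shows "- q (- x) \<le> q x"
proof -
  have "q 0 \<le> q x + q (- x)" using assms unfolding sublin_def by (metis add.right_inverse)
  then show ?thesis using sublin_0[OF assms] by simp
qed

lemma lgraph_init: assumes q: "sublin q" shows "lgraph q w {(c *\<^sub>R w, c * q w) | c. True}"
  unfolding lgraph_def
proof (intro conjI allI impI)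
  show "(w, q w) \<in> {(c *\<^sub>R w, c * q w) |c. True}" by (auto intro: exI[of _ 1])
next
  fix x r y s assume "(x, r) \<in> {(c *\<^sub>R w, c * q w) |c. True}" "(y, s) \<in> {(c *\<^sub>R w, c * q w) |c. True}"
  then obtain a b where "x = a *\<^sub>R w" "r = a * q w" "y = b *\<^sub>R w" "s = b * q w" by auto
  then show "(x + y, r + s) \<in> {(c *\<^sub>R w, c * q w) |c. True}"
    by (auto intro!: exI[of _ "a + b"] simp: scaleR_add_left distrib_right)
next
  fix x r c assume "(x, r) \<in> {(c *\<^sub>R w, c * q w) |c. True}"
  then obtain a where "x = a *\<^sub>R w" "r = a * q w" by auto
  then show "(c *\<^sub>R x, c * r) \<in> {(c *\<^sub>R w, c * q w) |c. True}"
    by (auto intro!: exI[of _ "c * a"])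
next
  fix x r s assume as: "(x, r) \<in> {(c *\<^sub>R w, c * q w) |c. True}" "(x, s) \<in> {(c *\<^sub>R w, c * q w) |c. True}"
  obtain a where a: "x = a *\<^sub>R w" "r = a * q w" using as(1) by blast
  obtain b where b: "x = b *\<^sub>R w" "s = b * q w" using as(2) by blast
  note ab = a b
  show "r = s"
  proof (cases "w = 0")
    case True then show ?thesis using ab sublin_0[OF q] by simp
  next
    case False
    then have "a = b" using ab by (metis scaleR_cancel_right)
    then show ?thesis using ab by simp
  qed
next
  fix x r assume "(x, r) \<in> {(c *\<^sub>R w, c * q w) |c. True}"
  then obtain a where a: "x = a *\<^sub>R w" "r = a * q w" by auto
  show "r \<le> q x"
  proof (cases "a \<ge> 0")
    case True then show ?thesis using a q unfolding sublin_def by simp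
  next
    case False
    have xe: "x = (- a) *\<^sub>R (- w)" using a by simp
    have na: "- a \<ge> 0" using False by simp
    have "\<forall>c x. c \<ge> 0 \<longrightarrow> q (c *\<^sub>R x) = c * q x" using q unfolding sublin_def by blast
    then have "q ((- a) *\<^sub>R (- w)) = (- a) * q (- w)" using na by blast
    then have "q x = (- a) * q (- w)" using xe by simp
    moreover have "- q (- w) \<le> q w" by (rule sublin_neg[OF q])
    ultimately have "a * q w \<le> a * (- q (- w))" using False mult_left_mono_neg[of "- q (- w)" "q w" a] by simp
    then show ?thesis using a \<open>q x = (- a) * q (- w)\<close> by simp
  qed
qed

lemma lgraph_zero: "lgraph q w H \<Longrightarrow> (0, 0) \<in> H"
  unfolding lgraph_def by (metis mult_zero_left scale_zero_left)

lemma lgraph_diff: "lgraph q w H \<Longrightarrow> (x, r) \<in> H \<Longrightarrow> (y, s) \<in> H \<Longrightarrow> (x - y, r - s) \<in> H"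
proof -
  assume H: "lgraph q w H" "(x, r) \<in> H" "(y, s) \<in> H"
  then have "((-1) *\<^sub>R y, (-1) * s) \<in> H" using lg_scale by blast
  then have "(x + (-1) *\<^sub>R y, r + (-1) * s) \<in> H" using H lg_add by blast
  then show ?thesis by simp
qed

lemma lgraph_extend:
  assumes q: "sublin q" and H: "lgraph q w H" and v: "\<And>r. (v, r) \<notin> H"
  shows "\<exists>H'. lgraph q w H' \<and> H \<subseteq> H' \<and> H' \<noteq> H"
proof -
  define S where "S = {r - q (x - v) | x r. (x, r) \<in> H}"
  have key: "r - q (x - v) \<le> q (y + v) - s" if "(x, r) \<in> H" "(y, s) \<in> H" for x r y s
  proof -
    have "(x + y, r + s) \<in> H" using lg_add[OF H that] .
    then have "r + s \<le> q (x + y)" using lg_dom[OF H] by blast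
    also have "\<dots> = q ((x - v) + (y + v))" by (simp add: algebra_simps)
    also have "\<dots> \<le> q (x - v) + q (y + v)" using q unfolding sublin_def by blast
    finally show ?thesis by simp
  qed
  have z: "(0, 0) \<in> H" by (rule lgraph_zero[OF H])
  have Sne: "S \<noteq> {}" using z unfolding S_def by blast
  have Sbd: "bdd_above S" unfolding S_def bdd_above_def using key[OF _ z] by auto
  define a where "a = Sup S"
  have a1: "r - q (x - v) \<le> a" if "(x, r) \<in> H" for x r
    unfolding a_def by (rule cSup_upper[OF _ Sbd]) (use that S_def in auto)
  have a2: "a \<le> q (y + v) - s" if "(y, s) \<in> H" for y s
    unfolding a_def by (rule cSup_least[OF Sne]) (use key that S_def in auto)
  define H' where "H' = {(x + c *\<^sub>R v, r + c * a) | x r c. (x, r) \<in> H}"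
  have HH': "H \<subseteq> H'" unfolding H'_def by force
  have "(v, a) = (0 + 1 *\<^sub>R v, 0 + 1 * a)" by simp
  then have vH': "(v, a) \<in> H'" unfolding H'_def using z by blast
  have "lgraph q w H'" unfolding lgraph_def
  proof (intro conjI allI impI)
    show "(w, q w) \<in> H'" using HH' lg_w[OF H] by blast
  next
    fix x r y s assume "(x, r) \<in> H'" "(y, s) \<in> H'"
    then obtain x1 r1 c1 x2 r2 c2 where e: "x = x1 + c1 *\<^sub>R v" "r = r1 + c1 * a" "(x1, r1) \<in> H"
      "y = x2 + c2 *\<^sub>R v" "s = r2 + c2 * a" "(x2, r2) \<in> H" unfolding H'_def by blast
    have "(x1 + x2, r1 + r2) \<in> H" using lg_add[OF H e(3) e(6)] .
    moreover have "(x + y, r + s) = ((x1 + x2) + (c1 + c2) *\<^sub>R v, (r1 + r2) + (c1 + c2) * a)"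
      using e by (simp add: algebra_simps)
    ultimately show "(x + y, r + s) \<in> H'" unfolding H'_def by blast
  next
    fix x r c assume "(x, r) \<in> H'"
    then obtain x1 r1 c1 where e: "x = x1 + c1 *\<^sub>R v" "r = r1 + c1 * a" "(x1, r1) \<in> H"
      unfolding H'_def by blast
    have "(c *\<^sub>R x1, c * r1) \<in> H" using lg_scale[OF H e(3)] .
    moreover have "(c *\<^sub>R x, c * r) = (c *\<^sub>R x1 + (c * c1) *\<^sub>R v, c * r1 + (c * c1) * a)"
      using e by (simp add: algebra_simps)
    ultimately show "(c *\<^sub>R x, c * r) \<in> H'" unfolding H'_def by blast
  next
    fix x r s assume "(x, r) \<in> H'" "(x, s) \<in> H'"
    then obtain x1 r1 c1 x2 r2 c2 where e: "x = x1 + c1 *\<^sub>R v" "r = r1 + c1 * a" "(x1, r1) \<in> H"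
      "x = x2 + c2 *\<^sub>R v" "s = r2 + c2 * a" "(x2, r2) \<in> H" unfolding H'_def by blast
    have d: "(x2 - x1, r2 - r1) \<in> H" by (rule lgraph_diff[OF H e(6) e(3)])
    have "c1 = c2"
    proof (rule ccontr)
      assume ne: "c1 \<noteq> c2"
      have "(c1 - c2) *\<^sub>R v = x2 - x1" using e by (simp add: algebra_simps)
      then have "(1 / (c1 - c2)) *\<^sub>R ((c1 - c2) *\<^sub>R v) = (1 / (c1 - c2)) *\<^sub>R (x2 - x1)" by simp
      then have "v = (1 / (c1 - c2)) *\<^sub>R (x2 - x1)" using ne by simp
      moreover have "((1 / (c1 - c2)) *\<^sub>R (x2 - x1), (1 / (c1 - c2)) * (r2 - r1)) \<in> H"
        using lg_scale[OF H d] .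
      ultimately show False using v by metis
    qed
    then have "x1 = x2" using e by simp
    then have "r1 = r2" using e lg_fun[OF H] by blast
    then show "r = s" using e \<open>c1 = c2\<close> by simp
  next
    fix x r assume "(x, r) \<in> H'"
    then obtain x1 r1 c where e: "x = x1 + c *\<^sub>R v" "r = r1 + c * a" "(x1, r1) \<in> H"
      unfolding H'_def by blast
    show "r \<le> q x"
    proof (cases c "0::real" rule: linorder_cases)
      case equal then show ?thesis using e lg_dom[OF H e(3)] by simp
    next
      case greater
      have "((1/c) *\<^sub>R x1, (1/c) * r1) \<in> H" using lg_scale[OF H e(3)] .
      from a2[OF this] have "a \<le> q ((1/c) *\<^sub>R x1 + v) - (1/c) * r1" .
      also have "(1/c) *\<^sub>R x1 + v = (1/c) *\<^sub>R x" using e greater by (simp add: algebra_simps)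
      also have "q ((1/c) *\<^sub>R x) = (1/c) * q x" using q greater unfolding sublin_def by simp
      finally have "c * a \<le> c * ((1/c) * q x - (1/c) * r1)" using greater by simp
      then have "c * a \<le> q x - r1" using greater by (simp add: algebra_simps)
      then show ?thesis using e by simp
    next
      case less
      define d where "d = - c"
      have dp: "d > 0" using less d_def by simp
      have "((1/d) *\<^sub>R x1, (1/d) * r1) \<in> H" using lg_scale[OF H e(3)] .
      from a1[OF this] have "(1/d) * r1 - q ((1/d) *\<^sub>R x1 - v) \<le> a" .
      also have "(1/d) *\<^sub>R x1 - v = (1/d) *\<^sub>R x" using e dp by (simp add: algebra_simps d_def)
      also have "q ((1/d) *\<^sub>R x) = (1/d) * q x" using q dp unfolding sublin_def by simp
      finally have "d * ((1/d) * r1 - (1/d) * q x) \<le> d * a" using dp by simp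
      then have "r1 - q x \<le> d * a" using dp by (simp add: algebra_simps)
      then show ?thesis using e by (simp add: d_def)
    qed
  qed
  moreover have "H' \<noteq> H" using vH' v by blast
  ultimately show ?thesis using HH' by blast
qed

lemma hahn_banach:
  assumes q: "sublin q"
  shows "\<exists>l. linear l \<and> (\<forall>x. l x \<le> q x) \<and> l w = q w"
proof -
  define A where "A = {H. lgraph q w H}"
  have "\<forall>C\<in>chains A. \<exists>U\<in>A. \<forall>X\<in>C. X \<subseteq> U"
  proof
    fix C assume C: "C \<in> chains A"
    show "\<exists>U\<in>A. \<forall>X\<in>C. X \<subseteq> U"
    proof (cases "C = {}")
      case True then show ?thesis using lgraph_init[OF q] A_def by blast
    next
      case False
      have CA: "C \<subseteq> A" using C by (simp add: chains_def)
      have ch: "chain\<^sub>\<subseteq> C" using C by (simp add: chains_def)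
      have LC: "lgraph q w H" if "H \<in> C" for H using that CA A_def by blast
      have two: "\<exists>H\<in>C. p1 \<in> H \<and> p2 \<in> H" if p: "p1 \<in> \<Union>C" "p2 \<in> \<Union>C" for p1 p2
      proof -
        obtain H1 H2 where h: "H1 \<in> C" "p1 \<in> H1" "H2 \<in> C" "p2 \<in> H2" using p by blast
        have "H1 \<subseteq> H2 \<or> H2 \<subseteq> H1" using ch h unfolding chain_subset_def by blast
        then show ?thesis using h by blast
      qed
      have "lgraph q w (\<Union>C)" unfolding lgraph_def
      proof (intro conjI allI impI)
        fix x r y s assume "(x, r) \<in> \<Union>C" "(y, s) \<in> \<Union>C"
        then obtain H where H: "H \<in> C" "(x, r) \<in> H" "(y, s) \<in> H" using two by blast
        have "(x + y, r + s) \<in> H" by (rule lg_add[OF LC[OF H(1)] H(2) H(3)])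
        then show "(x + y, r + s) \<in> \<Union>C" using H(1) by blast
      next
        fix x r c assume "(x, r) \<in> \<Union>C"
        then obtain H where H: "H \<in> C" "(x, r) \<in> H" by blast
        have "(c *\<^sub>R x, c * r) \<in> H" by (rule lg_scale[OF LC[OF H(1)] H(2)])
        then show "(c *\<^sub>R x, c * r) \<in> \<Union>C" using H(1) by blast
      next
        fix x r s assume "(x, r) \<in> \<Union>C" "(x, s) \<in> \<Union>C"
        then obtain H where H: "H \<in> C" "(x, r) \<in> H" "(x, s) \<in> H" using two by blast
        show "r = s" by (rule lg_fun[OF LC[OF H(1)] H(2) H(3)])
      next
        fix x r assume "(x, r) \<in> \<Union>C"
        then obtain H where H: "H \<in> C" "(x, r) \<in> H" by blast
        show "r \<le> q x" by (rule lg_dom[OF LC[OF H(1)] H(2)])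
      next
        obtain H where H: "H \<in> C" using False by blast
        have "(w, q w) \<in> H" by (rule lg_w[OF LC[OF H]])
        then show "(w, q w) \<in> \<Union>C" using H by blast
      qed
      then have "\<Union>C \<in> A" using A_def by simp
      moreover have "\<forall>X\<in>C. X \<subseteq> \<Union>C" by blast
      ultimately show ?thesis by blast
    qed
  qed
  from Zorn_Lemma2[OF this] obtain M where M: "M \<in> A" "\<forall>X\<in>A. M \<subseteq> X \<longrightarrow> X = M" by blast
  have LM: "lgraph q w M" using M(1) A_def by simp
  have tot: "\<exists>r. (x, r) \<in> M" for x
  proof (rule ccontr)
    assume "\<nexists>r. (x, r) \<in> M"
    then obtain H' where H': "lgraph q w H'" "M \<subseteq> H'" "H' \<noteq> M" using lgraph_extend[OF q LM] by blast
    have "H' \<in> A" using H'(1) A_def by simp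
    then have "H' = M" using M(2) H'(2) by blast
    then show False using H'(3) by simp
  qed
  define l where "l x = (THE r. (x, r) \<in> M)" for x
  have uniq0: "r = s" if "(x, r) \<in> M" "(x, s) \<in> M" for x r s by (rule lg_fun[OF LM that])
  have lM: "(x, l x) \<in> M" for x
  proof -
    obtain r where r: "(x, r) \<in> M" using tot by blast
    have "(THE r. (x, r) \<in> M) = r"
    proof (rule the_equality)
      show "(x, r) \<in> M" by (rule r)
      fix s assume "(x, s) \<in> M" then show "s = r" using uniq0 r by blast
    qed
    then show ?thesis using r l_def by simp
  qed
  have uniq: "l x = r" if "(x, r) \<in> M" for x r using uniq0[OF lM[of x] that] .
  have "linear l"
  proof (rule linearI)
    fix x y show "l (x + y) = l x + l y"
      by (rule uniq[OF lg_add[OF LM lM[of x] lM[of y]]])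
  next
    fix c x show "l (c *\<^sub>R x) = c *\<^sub>R l x"
      using uniq[OF lg_scale[OF LM lM[of x], of c]] by simp
  qed
  moreover have "\<forall>x. l x \<le> q x" using lM lg_dom[OF LM] by blast
  moreover have "l w = q w" by (rule uniq[OF lg_w[OF LM]])
  ultimately show ?thesis by blast
qed



lemma mink_sep:
  fixes K :: "'a::real_vector set"
  assumes cK: "convex K" and K0: "0 \<in> K" and abs: "\<And>x. \<exists>t>0. t *\<^sub>R x \<in> K" and w: "w \<notin> K"
  shows "\<exists>l::'a \<Rightarrow> real. linear l \<and> (\<forall>k\<in>K. l k \<le> 1) \<and> l w \<ge> 1"
proof -
  define G where "G x = {t. t > 0 \<and> (1/t) *\<^sub>R x \<in> K}" for x
  define q where "q x = Inf (G x)" for x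
  have Gne: "G x \<noteq> {}" for x
  proof -
    obtain t where "t > 0" "t *\<^sub>R x \<in> K" using abs by blast
    then have "1/t \<in> G x" by (simp add: G_def)
    then show ?thesis by blast
  qed
  have Gbd: "bdd_below (G x)" for x unfolding G_def bdd_below_def by (auto intro!: exI[of _ 0])
  have qlow: "q x \<le> t" if "t \<in> G x" for x t unfolding q_def by (rule cInf_lower[OF that Gbd])
  have qgr: "c \<le> q x" if "\<And>t. t \<in> G x \<Longrightarrow> c \<le> t" for x c
    unfolding q_def by (rule cInf_greatest[OF Gne that])
  have q0: "q x \<ge> 0" for x by (rule qgr) (simp add: G_def)
  have qK: "q k \<le> 1" if "k \<in> K" for k using qlow[of 1 k] that by (simp add: G_def)
  have qw: "q w \<ge> 1"
  proof (rule ccontr)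
    assume "\<not> 1 \<le> q w"
    then have "Inf (G w) < 1" by (simp add: q_def)
    then obtain t where t: "t \<in> G w" "t < 1" using cInf_lessD[OF Gne] by blast
    then have tp: "t > 0" and tK: "(1/t) *\<^sub>R w \<in> K" by (auto simp: G_def)
    have "t *\<^sub>R ((1/t) *\<^sub>R w) + (1 - t) *\<^sub>R (0::'a) \<in> K"
      by (rule convexD[OF cK tK K0]) (use tp t in auto)
    then show False using tp w by simp
  qed
  have sub: "q (x + y) \<le> q x + q y" for x y
  proof -
    have st: "s + t \<in> G (x + y)" if "s \<in> G x" "t \<in> G y" for s t
    proof -
      have sp: "s > 0" and sK: "(1/s) *\<^sub>R x \<in> K" and tp: "t > 0" and tK: "(1/t) *\<^sub>R y \<in> K"
        using that by (auto simp: G_def)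
      have st1: "s/(s+t) + t/(s+t) = 1" using sp tp by (simp add: add_divide_distrib[symmetric])
      have "(s/(s+t)) *\<^sub>R ((1/s) *\<^sub>R x) + (t/(s+t)) *\<^sub>R ((1/t) *\<^sub>R y) \<in> K"
        by (rule convexD[OF cK sK tK]) (use sp tp st1 in auto)
      moreover have "(s/(s+t)) *\<^sub>R ((1/s) *\<^sub>R x) = (1/(s+t)) *\<^sub>R x" using sp by simp
      moreover have "(t/(s+t)) *\<^sub>R ((1/t) *\<^sub>R y) = (1/(s+t)) *\<^sub>R y" using tp by simp
      ultimately have "(1/(s+t)) *\<^sub>R x + (1/(s+t)) *\<^sub>R y \<in> K" by (simp only:)
      then have "(1/(s+t)) *\<^sub>R (x + y) \<in> K" by (simp add: scaleR_add_right)
      then show ?thesis using sp tp by (simp add: G_def)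
    qed
    have step: "q (x + y) - t \<le> q x" if t: "t \<in> G y" for t
    proof (rule qgr)
      fix s assume "s \<in> G x"
      then have "q (x + y) \<le> s + t" using qlow st t by blast
      then show "q (x + y) - t \<le> s" by simp
    qed
    have "q (x + y) - q x \<le> q y"
    proof (rule qgr)
      fix t assume "t \<in> G y"
      from step[OF this] show "q (x + y) - q x \<le> t" by simp
    qed
    then show ?thesis by simp
  qed
  have hom: "q (c *\<^sub>R x) = c * q x" if c: "c \<ge> 0" for c x
  proof (cases "c = 0")
    case True
    have "q 0 \<le> t" if "t > 0" for t using qlow[of t 0] that K0 by (simp add: G_def)
    then have "q 0 \<le> 0 + e" if "e > 0" for e using that by simp
    then have "q 0 \<le> 0" by (rule field_le_epsilon)
    then show ?thesis using q0[of 0] True by simp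
  next
    case False
    then have cp: "c > 0" using c by simp
    have "q (c *\<^sub>R x) / c \<le> q x"
    proof (rule qgr)
      fix t assume "t \<in> G x"
      then have "c * t \<in> G (c *\<^sub>R x)" using cp by (auto simp: G_def)
      then have "q (c *\<^sub>R x) \<le> c * t" by (rule qlow)
      then show "q (c *\<^sub>R x) / c \<le> t" using cp by (simp add: divide_le_eq mult.commute)
    qed
    moreover have "q x \<le> q (c *\<^sub>R x) / c"
    proof -
      have "c * q x \<le> q (c *\<^sub>R x)"
      proof (rule qgr)
        fix t assume "t \<in> G (c *\<^sub>R x)"
        then have "t / c \<in> G x" using cp by (auto simp: G_def)
        then have "q x \<le> t / c" by (rule qlow)
        then show "c * q x \<le> t" using cp by (simp add: le_divide_eq mult.commute)
      qed
      then show ?thesis using cp by (simp add: le_divide_eq mult.commute)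
    qed
    ultimately show ?thesis using cp by (simp add: field_simps)
  qed
  have "sublin q" unfolding sublin_def using sub hom by blast
  from hahn_banach[OF this, of w] obtain l where "linear l" "\<forall>x. l x \<le> q x" "l w = q w" by blast
  moreover have "\<forall>k\<in>K. l k \<le> 1" using \<open>\<forall>x. l x \<le> q x\<close> qK order_trans by blast
  moreover have "l w \<ge> 1" using \<open>l w = q w\<close> qw by simp
  ultimately show ?thesis by (intro exI[of _ l]) simp
qed



lemma sep_point:
  fixes B :: "'a::real_vector set"
  assumes T: "lc_hausdorff_tvs T" and cB: "convex B" and b0: "b0 \<in> B" and u: "u \<notin> T closure_of B"
  shows "\<exists>l. linear l \<and> continuous_map T euclideanreal l \<and> (\<exists>\<delta>>0. \<forall>b\<in>B. l b \<le> l u - \<delta>)"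
proof -
  have ts: "topspace T = UNIV" using T by (auto simp: lc_hausdorff_tvs_def)
  obtain N where N: "u \<in> N" "openin T N" "\<forall>y\<in>B. y \<notin> N"
    using u ts unfolding closure_of_def by auto
  define V where "V = {v. u + v \<in> N}"
  have oV: "openin T V" unfolding V_def by (rule tvs_open_pre[OF T tvs_add[OF T] N(2)])
  have V0: "0 \<in> V" using N by (simp add: V_def)
  obtain V1 where V1: "openin T V1" "convex V1" "0 \<in> V1" "V1 \<subseteq> V"
    using T oV V0 unfolding lc_hausdorff_tvs_def by blast
  define V' where "V' = V1 \<inter> {v. (-1) *\<^sub>R v \<in> V1}"
  have oV': "openin T V'" unfolding V'_def
    by (intro openin_Int V1(1) tvs_open_pre[OF T tvs_scale[OF T] V1(1)])
  have V'0: "0 \<in> V'" using V1 by (simp add: V'_def)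
  have V'neg: "- v \<in> V'" if "v \<in> V'" for v using that by (simp add: V'_def)
  have cV': "convex V'" unfolding V'_def
  proof (intro convex_Int V1(2) convexI)
    fix x y :: 'a and a b :: real
    assume "x \<in> {v. (-1) *\<^sub>R v \<in> V1}" "y \<in> {v. (-1) *\<^sub>R v \<in> V1}" "0 \<le> a" "0 \<le> b" "a + b = 1"
    then have "a *\<^sub>R (- x) + b *\<^sub>R (- y) \<in> V1" by (intro convexD[OF V1(2)]) auto
    then show "a *\<^sub>R x + b *\<^sub>R y \<in> {v. (-1) *\<^sub>R v \<in> V1}" by (simp add: algebra_simps)
  qed
  define K where "K = {b - b0 + v | b v. b \<in> B \<and> v \<in> V'}"
  have VK: "v \<in> K" if "v \<in> V'" for v
  proof -
    have "v = b0 - b0 + v" by simp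
    then show ?thesis using that b0 unfolding K_def by blast
  qed
  have cK: "convex K"
  proof (rule convexI)
    fix x y :: 'a and a c :: real
    assume xy: "x \<in> K" "y \<in> K" "0 \<le> a" "0 \<le> c" "a + c = 1"
    obtain b1 v1 where 1: "x = b1 - b0 + v1" "b1 \<in> B" "v1 \<in> V'" using xy(1) K_def by blast
    obtain b2 v2 where 2: "y = b2 - b0 + v2" "b2 \<in> B" "v2 \<in> V'" using xy(2) K_def by blast
    have "a *\<^sub>R x + c *\<^sub>R y = (a *\<^sub>R b1 + c *\<^sub>R b2) - (a + c) *\<^sub>R b0 + (a *\<^sub>R v1 + c *\<^sub>R v2)"
      unfolding 1(1) 2(1) by (simp add: algebra_simps)
    also have "\<dots> = (a *\<^sub>R b1 + c *\<^sub>R b2) - b0 + (a *\<^sub>R v1 + c *\<^sub>R v2)" using xy by simp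
    finally show "a *\<^sub>R x + c *\<^sub>R y \<in> K"
      using convexD[OF cB 1(2) 2(2) xy(3-5)] convexD[OF cV' 1(3) 2(3) xy(3-5)] unfolding K_def by blast
  qed
  have K0: "0 \<in> K" using VK V'0 by blast
  have absV: "\<exists>t>0. t *\<^sub>R x \<in> V'" for x
  proof -
    obtain e where "e > 0" "\<forall>t. \<bar>t\<bar> < e \<longrightarrow> t *\<^sub>R x \<in> V'" using tvs_absorb[OF T oV' V'0] by blast
    then show ?thesis by (intro exI[of _ "e/2"]) auto
  qed
  have absK: "\<exists>t>0. t *\<^sub>R x \<in> K" for x using absV VK by blast
  have wK: "u - b0 \<notin> K"
  proof
    assume "u - b0 \<in> K"
    then obtain b v where bv: "u - b0 = b - b0 + v" "b \<in> B" "v \<in> V'" using K_def by blast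
    then have "- v \<in> V1" using V'_def by simp
    then have "u + (- v) \<in> N" using V1(4) V_def by blast
    moreover have "u + (- v) = b" using bv by (simp add: algebra_simps)
    ultimately show False using N(3) bv by blast
  qed
  obtain l :: "'a \<Rightarrow> real" where l: "linear l" "\<forall>k\<in>K. l k \<le> 1" "l (u - b0) \<ge> 1"
    using mink_sep[OF cK K0 absK wK] by blast
  obtain s where s: "s > 0" "s *\<^sub>R (u - b0) \<in> V'" using absV by blast
  have "l b \<le> l u - s" if "b \<in> B" for b
  proof -
    have "b - b0 + s *\<^sub>R (u - b0) \<in> K" using that s unfolding K_def by blast
    then have "l (b - b0 + s *\<^sub>R (u - b0)) \<le> 1" using l by blast
    then have "l b - l b0 + s * l (u - b0) \<le> 1" using l(1) by (simp add: linear_add linear_diff linear_scale)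
    moreover have "l u - l b0 \<ge> 1" using l(1,3) by (simp add: linear_diff)
    moreover have "s * l (u - b0) \<ge> s" using s l(3) by simp
    ultimately show ?thesis by linarith
  qed
  moreover have "continuous_map T euclideanreal l"
  proof (rule tvs_lin_cont[OF T l(1) oV' V'0])
    fix v assume v: "v \<in> V'"
    have "l v \<le> 1" using VK[OF v] l by blast
    moreover have "l (- v) \<le> 1" using VK[OF V'neg[OF v]] l by blast
    ultimately show "\<bar>l v\<bar> \<le> 1" using l(1) by (simp add: linear_neg)
  qed
  ultimately show ?thesis using l s by blast
qed

lemma subgrad:
  fixes E :: "('y::real_vector \<times> real) set"
  assumes T: "lc_hausdorff_tvs T" and cE: "convex E"
    and up0: "\<forall>y r r'. (y, r) \<in> E \<longrightarrow> r \<le> r' \<longrightarrow> (y, r') \<in> E"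
    and U0: "openin T U" "0 \<in> U" "\<forall>y\<in>U. (y, c) \<in> E"
    and nm: "(0, - m) \<notin> E"
  shows "\<exists>ys. linear ys \<and> continuous_map T euclideanreal ys \<and> (\<forall>y r. (y, r) \<in> E \<longrightarrow> ys y \<le> r + m)"
proof -
  have up: "(y, r') \<in> E" if "(y, r) \<in> E" "r \<le> r'" for y r r' using up0 that by blast
  have U: "openin T U" "0 \<in> U" using U0 by auto
  have U3: "(y, c) \<in> E" if "y \<in> U" for y using U0 that by auto
  have ts: "topspace T = UNIV" using T by (auto simp: lc_hausdorff_tvs_def)
  have cm: "c > - m"
  proof (rule ccontr)
    assume "\<not> c > - m"
    then have "(0, - m) \<in> E" using up[OF U3[OF U(2)]] by simp
    then show False using nm by simp
  qed
  define e0 where "e0 = ((0::'y), c + 1)"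
  define K where "K = {k. k + e0 \<in> E}"
  have cK: "convex K"
  proof (rule convexI)
    fix x y :: "'y \<times> real" and a b :: real
    assume xy: "x \<in> K" "y \<in> K" "0 \<le> a" "0 \<le> b" "a + b = 1"
    have "a *\<^sub>R (x + e0) + b *\<^sub>R (y + e0) \<in> E" using xy convexD[OF cE] K_def by simp
    moreover have "a *\<^sub>R (x + e0) + b *\<^sub>R (y + e0) = a *\<^sub>R x + b *\<^sub>R y + (a + b) *\<^sub>R e0"
      by (simp add: algebra_simps)
    ultimately show "a *\<^sub>R x + b *\<^sub>R y \<in> K" using xy K_def by simp
  qed
  have K0: "0 \<in> K" using up[OF U3[OF U(2)], of "c + 1"] by (simp add: K_def e0_def)
  have absK: "\<exists>t>0. t *\<^sub>R k \<in> K" for k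
  proof -
    obtain y r where k: "k = (y, r)" by fastforce
    obtain e where e: "e > 0" "\<forall>t. \<bar>t\<bar> < e \<longrightarrow> t *\<^sub>R y \<in> U" using tvs_absorb[OF T U(1,2)] by blast
    define t where "t = min (e/2) (1 / (\<bar>r\<bar> + 1))"
    have tp: "t > 0" using e by (simp add: t_def)
    have "t *\<^sub>R y \<in> U" using e tp by (simp add: t_def)
    then have E1: "(t *\<^sub>R y, c) \<in> E" using U3 by blast
    have "t \<le> 1 / (\<bar>r\<bar> + 1)" by (simp add: t_def)
    then have "t * \<bar>r\<bar> \<le> (1 / (\<bar>r\<bar> + 1)) * \<bar>r\<bar>" by (rule mult_right_mono) simp
    then have "t * \<bar>r\<bar> \<le> \<bar>r\<bar> / (\<bar>r\<bar> + 1)" by simp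
    also have "\<dots> < 1" by simp
    finally have "t * \<bar>r\<bar> < 1" .
    moreover have "t * (- r) \<le> t * \<bar>r\<bar>" using tp by (intro mult_left_mono) auto
    ultimately have "c \<le> t * r + (c + 1)" by simp
    then have "(t *\<^sub>R y, t * r + (c + 1)) \<in> E" using up[OF E1] by blast
    then show ?thesis using tp k by (intro exI[of _ t]) (simp add: K_def e0_def)
  qed
  have wK: "(0, - m) - e0 \<notin> K" using nm by (simp add: K_def)
  obtain l :: "'y \<times> real \<Rightarrow> real" where l: "linear l" "\<forall>k\<in>K. l k \<le> 1" "l ((0, - m) - e0) \<ge> 1"
    using mink_sep[OF cK K0 absK wK] by blast
  define \<beta> where "\<beta> = l (0, 1)"
  define g where "g y = l (y, 0)" for y
  have ldec: "l (y, r) = g y + r * \<beta>" for y r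
  proof -
    have "(y, r) = (y, 0) + r *\<^sub>R ((0::'y), (1::real))" by simp
    then have "l (y, r) = l ((y, 0) + r *\<^sub>R ((0::'y), (1::real)))" by simp
    also have "\<dots> = l (y, 0) + l (r *\<^sub>R ((0::'y), (1::real)))" by (rule linear_add[OF l(1)])
    also have "l (r *\<^sub>R ((0::'y), (1::real))) = r * l (0, 1)" using linear_scale[OF l(1), of r "((0::'y), (1::real))"] by simp
    finally have "l (y, r) = l (y, 0) + r * l (0, 1)" .
    then show ?thesis by (simp add: g_def \<beta>_def)
  qed
  define D where "D = m + c + 1"
  have Dp: "D > 1" using cm by (simp add: D_def)
  have e: "(0, - m) - e0 = ((0::'y), - m - (c + 1))" by (simp add: e0_def)
  have "g 0 = l 0" by (simp add: g_def zero_prod_def)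
  then have g0: "g 0 = 0" using l(1) by (simp add: linear_0)
  have "l ((0, - m) - e0) = g 0 + (- m - (c + 1)) * \<beta>" unfolding e by (rule ldec)
  also have "\<dots> = (- D) * \<beta>" using g0 by (simp add: D_def algebra_simps)
  finally have "l ((0, - m) - e0) = (- D) * \<beta>" .
  then have Db: "(- D) * \<beta> \<ge> 1" using l(3) by simp
  define \<gamma> where "\<gamma> = - \<beta>"
  have gD: "D * \<gamma> \<ge> 1" using Db by (simp add: \<gamma>_def)
  have gp: "\<gamma> > 0"
  proof (rule ccontr)
    assume "\<not> \<gamma> > 0"
    then have "D * \<gamma> \<le> 0" using Dp by (intro mult_nonneg_nonpos) auto
    then show False using gD by simp
  qed
  have ig: "1 / \<gamma> \<le> D" using gD gp by (simp add: divide_le_eq mult.commute)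
  have mainineq: "g y \<le> 1 + \<gamma> * (r - c - 1)" if "(y, r) \<in> E" for y r
  proof -
    have "(y, r - c - 1) \<in> K" using that by (simp add: K_def e0_def)
    then have "l (y, r - c - 1) \<le> 1" using l by blast
    then show ?thesis using ldec by (simp add: \<gamma>_def algebra_simps)
  qed
  define ys where "ys y = g y / \<gamma>" for y
  have lin: "linear ys"
  proof (rule linearI)
    fix x y show "ys (x + y) = ys x + ys y"
      using linear_add[OF l(1), of "(x, 0)" "(y, 0)"] by (simp add: ys_def g_def add_divide_distrib)
  next
    fix a x show "ys (a *\<^sub>R x) = a *\<^sub>R ys x"
      using linear_scale[OF l(1), of a "(x, 0)"] by (simp add: ys_def g_def)
  qed
  have bound: "ys y \<le> r + m" if "(y, r) \<in> E" for y r
  proof -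
    have "g y / \<gamma> \<le> (1 + \<gamma> * (r - c - 1)) / \<gamma>" using mainineq[OF that] gp by (simp add: divide_right_mono)
    also have "\<dots> = 1 / \<gamma> + (r - c - 1)" using gp by (simp add: field_simps)
    also have "\<dots> \<le> D + (r - c - 1)" using ig by simp
    finally show ?thesis by (simp add: ys_def D_def)
  qed
  define W where "W = U \<inter> {v. (-1) *\<^sub>R v \<in> U}"
  have oW: "openin T W" unfolding W_def
    by (intro openin_Int U(1) tvs_open_pre[OF T tvs_scale[OF T] U(1)])
  have W0: "0 \<in> W" using U by (simp add: W_def)
  have gU: "g y \<le> 1" if "y \<in> U" for y
    using mainineq[OF U3[OF that]] gp by simp
  have cont: "continuous_map T euclideanreal ys"
  proof (rule tvs_lin_cont[OF T lin oW W0])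
    fix v assume v: "v \<in> W"
    have "g v \<le> 1" "g (- v) \<le> 1" using v gU by (auto simp: W_def)
    moreover have "g (- v) = - g v" using linear_neg[OF l(1), of "(v, 0)"] by (simp add: g_def)
    ultimately have "\<bar>g v\<bar> \<le> 1" by simp
    have "\<bar>ys v\<bar> = \<bar>g v\<bar> / \<gamma>" using gp by (simp add: ys_def)
    also have "\<dots> \<le> 1 / \<gamma>" using \<open>\<bar>g v\<bar> \<le> 1\<close> gp by (intro divide_right_mono) auto
    finally show "\<bar>ys v\<bar> \<le> 1 / \<gamma>" .
  qed
  show ?thesis using lin cont bound by blast
qed



theorem mainTheorem1:
  fixes TX :: "'x::real_vector topology" and TY :: "'y::real_vector topology"
    and TZ :: "'z::real_vector topology"
    and C :: "'z set" and f :: "'x \<times> 'y \<Rightarrow> 'z set" and x0 :: 'x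
  assumes "lc_hausdorff_tvs TX" and "lc_hausdorff_tvs TY" and "lc_hausdorff_tvs TZ"
    and "closedin TZ C" and "convex C" and "cone C" and "0 \<in> C" and "C \<noteq> UNIV"
    and "\<forall>w. f w \<in> FZC TZ C"
    and "setval_convex f"
    and "(x0, 0) \<in> sdom f"
    and "\<forall>zs \<in> neg_dual_cone TZ C - {\<lambda>_. 0}.
           usc_at TY (scalarization (\<lambda>y. f (x0, y)) zs) 0"
  shows "marginal TZ f 0 =
           (\<Inter>ys \<in> cdual TY. \<Inter>zs \<in> neg_dual_cone TZ C - {\<lambda>_. 0}.
              neg_conj TZ f (\<lambda>_. 0, ys) zs)
       \<and> (\<exists>yfam :: ('z \<Rightarrow> real) \<Rightarrow> ('y \<Rightarrow> real).
           (\<forall>zs \<in> {zs \<in> neg_dual_cone TZ C - {\<lambda>_. 0}. proper_ext (scalarization f zs)}.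
               yfam zs \<in> cdual TY)
         \<and> marginal TZ f 0 =
             (\<Inter>zs \<in> {zs \<in> neg_dual_cone TZ C - {\<lambda>_. 0}. proper_ext (scalarization f zs)}.
                neg_conj TZ f (\<lambda>_. 0, yfam zs) zs))"
proof -
  note TY = assms(2) and TZ = assms(3) and cone = assms(6) and FZ = assms(9)
    and sc = assms(10) and dom = assms(11) and usc = assms(12)
  have tsZ: "topspace TZ = UNIV" using TZ by (auto simp: lc_hausdorff_tvs_def)
  define B where "B = (\<Union>x. f (x, 0))"
  have A: "marginal TZ f 0 = TZ closure_of B" by (simp add: marginal_def B_def)
  define ND where "ND = neg_dual_cone TZ C - {\<lambda>_. 0}"
  define good where "good zs ys m \<longleftrightarrow> (\<forall>x y w. w \<in> f (x, y) \<longrightarrow> zs w + ys y \<le> m)"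
    for zs :: "'z \<Rightarrow> real" and ys :: "'y \<Rightarrow> real" and m
  define Ms where "Ms zs = Sup (zs ` B)" for zs :: "'z \<Rightarrow> real"
  define yfam where "yfam zs = (if \<exists>ys\<in>cdual TY. good zs ys (Ms zs)
      then SOME ys. ys \<in> cdual TY \<and> good zs ys (Ms zs) else (\<lambda>_. 0))" for zs
  obtain w0 where w0: "w0 \<in> f (x0, 0)" using dom by (auto simp: sdom_def)
  have fC: "b + c \<in> f (x, y)" if "b \<in> f (x, y)" "c \<in> C" for b c x y
  proof -
    have "b + c \<in> msum (f (x, y)) C" using that by (auto simp: msum_def)
    also have "\<dots> \<subseteq> TZ closure_of (msum (f (x, y)) C)" by (rule closure_of_subset) (simp add: tsZ)
    also have "\<dots> = f (x, y)" using FZ by (simp add: FZC_def)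
    finally show ?thesis .
  qed
  have fconv: "a *\<^sub>R w1 + c *\<^sub>R w2 \<in> f (a *\<^sub>R (x1, y1) + c *\<^sub>R (x2, y2))"
    if "w1 \<in> f (x1, y1)" "w2 \<in> f (x2, y2)" "0 \<le> a" "0 \<le> c" "a + c = 1" for w1 w2 x1 y1 x2 y2 a c
  proof (cases "a = 0 \<or> c = 0")
    case True then show ?thesis using that by auto
  next
    case False
    then have a: "0 < a" "a < 1" and c: "c = 1 - a" using that by auto
    have "a *\<^sub>R w1 + c *\<^sub>R w2 \<in> msum ((\<lambda>z. a *\<^sub>R z) ` f (x1, y1)) ((\<lambda>z. (1 - a) *\<^sub>R z) ` f (x2, y2))"
      using that c by (auto simp: msum_def)
    also have "\<dots> \<subseteq> f (a *\<^sub>R (x1, y1) + (1 - a) *\<^sub>R (x2, y2))" using sc a unfolding setval_convex_def by blast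
    finally show ?thesis using c by simp
  qed
  have convB: "convex B"
  proof (rule convexI)
    fix p q :: 'z and a c :: real
    assume h: "p \<in> B" "q \<in> B" "0 \<le> a" "0 \<le> c" "a + c = 1"
    obtain x1 x2 where "p \<in> f (x1, 0)" "q \<in> f (x2, 0)" using h B_def by blast
    from fconv[OF this h(3-5)] show "a *\<^sub>R p + c *\<^sub>R q \<in> B" unfolding B_def by auto
  qed
  have w0B: "w0 \<in> B" using w0 B_def by blast
  have F1: "TZ closure_of B \<subseteq> neg_conj TZ f (\<lambda>_. 0, ys) zs" if "linear ys" "linear zs" for ys zs
    unfolding neg_conj_def
  proof (rule closure_of_mono, rule subsetI)
    fix b assume "b \<in> B"
    then obtain x where b: "b \<in> f (x, 0)" using B_def by blast
    have "0 \<in> Sfun (\<lambda>_. 0, ys) zs (- x, - 0)" using that by (simp add: Sfun_def linear_0)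
    then have "b + 0 \<in> msum (f (x, 0)) (Sfun (\<lambda>_. 0, ys) zs (- x, - 0))" using b unfolding msum_def by blast
    then show "b \<in> (\<Union>(x, y). msum (f (x, y)) (Sfun (\<lambda>_. 0, ys) zs (- x, - y)))"
      by (intro UN_I[where a="(x, 0)"]) auto
  qed
  have F2: "neg_conj TZ f (\<lambda>_. 0, ys) zs \<subseteq> {u. zs u \<le> m}"
    if "zs \<in> cdual TZ" "linear ys" "good zs ys m" for ys zs m
    unfolding neg_conj_def
  proof (rule closure_of_minimal)
    have "closedin TZ {x \<in> topspace TZ. zs x \<in> {..m}}"
      using that(1) by (intro closedin_continuous_map_preimage) (auto simp: cdual_def)
    then show "closedin TZ {u. zs u \<le> m}" by (simp add: tsZ)
    show "(\<Union>(x, y). msum (f (x, y)) (Sfun (\<lambda>_. 0, ys) zs (- x, - y))) \<subseteq> {u. zs u \<le> m}"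
    proof (clarsimp simp: msum_def Sfun_def)
      fix x y w s assume ws: "w \<in> f (x, y)" "ys (- y) + zs s \<le> 0"
      have lz: "linear zs" using that(1) by (simp add: cdual_def)
      have "zs (w + s) = zs w + zs s" using lz by (simp add: linear_add)
      also have "\<dots> \<le> zs w + ys y" using ws(2) that(2) by (simp add: linear_neg)
      also have "\<dots> \<le> m" using that(3) ws(1) unfolding good_def by blast
      finally show "zs (w + s) \<le> m" .
    qed
  qed
  have F4: "proper_ext (scalarization f zs)" if "good zs ys m" for zs ys m
    unfolding proper_ext_def
  proof (intro conjI allI exI)
    fix p :: "'x \<times> 'y"
    obtain x y where p: "p = (x, y)" by fastforce
    have "ereal (ys y - m) \<le> scalarization f zs p" unfolding scalarization_def p
    proof (rule Inf_greatest, clarsimp)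
      fix w assume "w \<in> f (x, y)"
      then show "ys y - m \<le> - zs w" using that unfolding good_def by force
    qed
    then show "scalarization f zs p \<noteq> - \<infinity>" by auto
  next
    have "scalarization f zs (x0, 0) \<le> ereal (- zs w0)" unfolding scalarization_def
      by (rule Inf_lower) (use w0 in auto)
    then show "scalarization f zs (x0, 0) \<noteq> \<infinity>" by auto
  qed
  have F3: "\<exists>zs\<in>ND. zs u > Ms zs \<and> (\<exists>ys\<in>cdual TY. good zs ys (Ms zs))" if u: "u \<notin> TZ closure_of B" for u
  proof -
    obtain l \<delta> where l: "linear l" "continuous_map TZ euclideanreal l" "\<delta> > 0" "\<forall>b\<in>B. l b \<le> l u - \<delta>"
      using sep_point[OF TZ convB w0B u] by blast
    have Bne: "l ` B \<noteq> {}" using w0B by blast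
    have Bbd: "bdd_above (l ` B)" using l(4) by (auto simp: bdd_above_def)
    have Msu: "Ms l \<le> l u - \<delta>" unfolding Ms_def by (rule cSup_least[OF Bne]) (use l(4) in auto)
    have Mup: "l b \<le> Ms l" if "b \<in> B" for b unfolding Ms_def by (rule cSup_upper[OF _ Bbd]) (use that in auto)
    have lcd: "l \<in> cdual TZ" using l by (simp add: cdual_def)
    have lC: "l c \<le> 0" if c: "c \<in> C" for c
    proof (rule ccontr)
      assume "\<not> l c \<le> 0"
      then have lc: "l c > 0" by simp
      define t where "t = (l u - l w0) / l c"
      have tp: "t \<ge> 0" using l(4) w0B l(3) lc by (force simp: t_def)
      have "t *\<^sub>R c \<in> C" using cone c tp unfolding cone_def by blast
      then have "w0 + t *\<^sub>R c \<in> B" using fC[OF w0] B_def by blast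
      then have "l (w0 + t *\<^sub>R c) \<le> l u - \<delta>" using l(4) by blast
      moreover have "l (w0 + t *\<^sub>R c) = l u" using l(1) lc by (simp add: linear_add linear_scale t_def)
      ultimately show False using l(3) by simp
    qed
    have lnz: "l \<noteq> (\<lambda>_. 0)"
    proof
      assume "l = (\<lambda>_. 0)"
      then show False using l(4) w0B l(3) by force
    qed
    have lND: "l \<in> ND" using lcd lC lnz by (simp add: ND_def neg_dual_cone_def)
    define E where "E = {(y, r). \<exists>x w. w \<in> f (x, y) \<and> - l w < r}"
    have cE: "convex E"
    proof (rule convexI)
      fix p q :: "'y \<times> real" and a c :: real
      assume h: "p \<in> E" "q \<in> E" "0 \<le> a" "0 \<le> c" "a + c = 1"
      obtain y1 r1 x1 w1 where 1: "p = (y1, r1)" "w1 \<in> f (x1, y1)" "- l w1 < r1" using h(1) E_def by auto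
      obtain y2 r2 x2 w2 where 2: "q = (y2, r2)" "w2 \<in> f (x2, y2)" "- l w2 < r2" using h(2) E_def by auto
      have fw: "a *\<^sub>R w1 + c *\<^sub>R w2 \<in> f (a *\<^sub>R x1 + c *\<^sub>R x2, a *\<^sub>R y1 + c *\<^sub>R y2)"
        using fconv[OF 1(2) 2(2) h(3-5)] by simp
      have "- l (a *\<^sub>R w1 + c *\<^sub>R w2) = a * (- l w1) + c * (- l w2)" using l(1)
        by (simp add: linear_add linear_scale)
      also have "\<dots> < a * r1 + c * r2"
      proof (cases "a = 0")
        case True then show ?thesis using h 2 by simp
      next
        case False
        then have "a * (- l w1) < a * r1" by (intro mult_strict_left_mono) (use h(3) 1(3) in auto)
        moreover have "c * (- l w2) \<le> c * r2" by (intro mult_left_mono) (use h(4) 2(3) in auto)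
        ultimately show ?thesis by simp
      qed
      finally show "a *\<^sub>R p + c *\<^sub>R q \<in> E" using fw 1 2 unfolding E_def by auto
    qed
    have up: "(y, r') \<in> E" if yr: "(y, r) \<in> E" "r \<le> r'" for y r r'
    proof -
      obtain x w where xw: "w \<in> f (x, y)" "- l w < r" using yr(1) unfolding E_def by auto
      then have "- l w < r'" using yr(2) by simp
      then show ?thesis unfolding E_def using xw(1) by blast
    qed
    define c0 where "c0 = - l w0 + 1"
    have "scalarization (\<lambda>y. f (x0, y)) l 0 \<le> ereal (- l w0)" unfolding scalarization_def
      by (rule Inf_lower) (use w0 in auto)
    then have "scalarization (\<lambda>y. f (x0, y)) l 0 < ereal c0" by (simp add: c0_def le_less_trans)
    then obtain U where U: "openin TY U" "0 \<in> U" "\<forall>y\<in>U. scalarization (\<lambda>y. f (x0, y)) l y < ereal c0"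
      using usc lND unfolding usc_at_def ND_def by blast
    have UE: "(y, c0) \<in> E" if "y \<in> U" for y
    proof -
      have "Inf ((\<lambda>z. ereal (- l z)) ` f (x0, y)) < ereal c0" using U that by (simp add: scalarization_def)
      then obtain w where "w \<in> f (x0, y)" "ereal (- l w) < ereal c0" by (auto simp: Inf_less_iff)
      then show ?thesis unfolding E_def by auto
    qed
    have nm: "(0, - Ms l) \<notin> E"
    proof
      assume "(0, - Ms l) \<in> E"
      then obtain x w where "w \<in> f (x, 0)" "- l w < - Ms l" unfolding E_def by auto
      then show False using Mup B_def by force
    qed
    have up': "\<forall>y r r'. (y, r) \<in> E \<longrightarrow> r \<le> r' \<longrightarrow> (y, r') \<in> E" using up by blast
    have UE': "\<forall>y\<in>U. (y, c0) \<in> E" using UE by blast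
    obtain ys where ys: "linear ys" "continuous_map TY euclideanreal ys" "\<forall>y r. (y, r) \<in> E \<longrightarrow> ys y \<le> r + Ms l"
      using subgrad[OF TY cE up' U(1,2) UE' nm] by blast
    have "good l ys (Ms l)" unfolding good_def
    proof (intro allI impI)
      fix x y w assume w: "w \<in> f (x, y)"
      have "ys y \<le> (- l w + Ms l) + e" if "e > 0" for e
      proof -
        have "(y, - l w + e) \<in> E" using w that unfolding E_def by force
        then show ?thesis using ys(3) by force
      qed
      then have "ys y \<le> - l w + Ms l" by (rule field_le_epsilon)
      then show "l w + ys y \<le> Ms l" by simp
    qed
    moreover have "ys \<in> cdual TY" using ys by (simp add: cdual_def)
    moreover have "l u > Ms l" using Msu l(3) by simp
    ultimately show ?thesis using lND by blast
  qed
  have zero_cd: "(\<lambda>_. 0) \<in> cdual TY" by (simp add: cdual_def linear_zero)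
  have Y1: "yfam zs \<in> cdual TY" for zs
  proof (cases "\<exists>ys\<in>cdual TY. good zs ys (Ms zs)")
    case True
    then have "\<exists>ys. ys \<in> cdual TY \<and> good zs ys (Ms zs)" by blast
    from someI_ex[OF this] show ?thesis using True by (simp add: yfam_def)
  next
    case False then show ?thesis using zero_cd by (simp add: yfam_def)
  qed
  have Y2: "good zs (yfam zs) (Ms zs)" if "\<exists>ys\<in>cdual TY. good zs ys (Ms zs)" for zs
  proof -
    have "\<exists>ys. ys \<in> cdual TY \<and> good zs ys (Ms zs)" using that by blast
    from someI_ex[OF this] show ?thesis using that by (simp add: yfam_def)
  qed
  have NDlin: "linear zs" "zs \<in> cdual TZ" if "zs \<in> ND" for zs
    using that by (auto simp: ND_def neg_dual_cone_def cdual_def)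
  have cdlin: "linear ys" if "ys \<in> cdual TY" for ys using that by (simp add: cdual_def)
  have claim1: "TZ closure_of B = (\<Inter>ys \<in> cdual TY. \<Inter>zs \<in> ND. neg_conj TZ f (\<lambda>_. 0, ys) zs)"
  proof
    show "TZ closure_of B \<subseteq> (\<Inter>ys \<in> cdual TY. \<Inter>zs \<in> ND. neg_conj TZ f (\<lambda>_. 0, ys) zs)"
      using F1 NDlin cdlin by blast
    show "(\<Inter>ys \<in> cdual TY. \<Inter>zs \<in> ND. neg_conj TZ f (\<lambda>_. 0, ys) zs) \<subseteq> TZ closure_of B"
    proof
      fix u assume u: "u \<in> (\<Inter>ys \<in> cdual TY. \<Inter>zs \<in> ND. neg_conj TZ f (\<lambda>_. 0, ys) zs)"
      show "u \<in> TZ closure_of B"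
      proof (rule ccontr)
        assume "u \<notin> TZ closure_of B"
        then obtain zs where zs: "zs \<in> ND" "zs u > Ms zs" "\<exists>ys\<in>cdual TY. good zs ys (Ms zs)" using F3 by blast
        have "u \<in> neg_conj TZ f (\<lambda>_. 0, yfam zs) zs" using u Y1 zs(1) by blast
        then have "zs u \<le> Ms zs" using F2[OF NDlin(2)[OF zs(1)] cdlin[OF Y1] Y2[OF zs(3)]] by blast
        then show False using zs by simp
      qed
    qed
  qed
  define P where "P = {zs \<in> neg_dual_cone TZ C - {\<lambda>_. 0}. proper_ext (scalarization f zs)}"
  have claim2: "TZ closure_of B = (\<Inter>zs \<in> P. neg_conj TZ f (\<lambda>_. 0, yfam zs) zs)"
  proof
    show "TZ closure_of B \<subseteq> (\<Inter>zs \<in> P. neg_conj TZ f (\<lambda>_. 0, yfam zs) zs)"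
      using F1 NDlin cdlin Y1 unfolding P_def ND_def by blast
    show "(\<Inter>zs \<in> P. neg_conj TZ f (\<lambda>_. 0, yfam zs) zs) \<subseteq> TZ closure_of B"
    proof
      fix u assume u: "u \<in> (\<Inter>zs \<in> P. neg_conj TZ f (\<lambda>_. 0, yfam zs) zs)"
      show "u \<in> TZ closure_of B"
      proof (rule ccontr)
        assume "u \<notin> TZ closure_of B"
        then obtain zs where zs: "zs \<in> ND" "zs u > Ms zs" "\<exists>ys\<in>cdual TY. good zs ys (Ms zs)" using F3 by blast
        have "zs \<in> P" using zs(1) F4[OF Y2[OF zs(3)]] unfolding P_def ND_def by blast
        then have "u \<in> neg_conj TZ f (\<lambda>_. 0, yfam zs) zs" using u by blast
        then have "zs u \<le> Ms zs" using F2[OF NDlin(2)[OF zs(1)] cdlin[OF Y1] Y2[OF zs(3)]] by blast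
        then show False using zs by simp
      qed
    qed
  qed
  show ?thesis
    unfolding A
    using claim1 claim2 Y1 unfolding ND_def P_def by blast
qed


end
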